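(* Let $k_0>0$ and $c_0\in L^1([-\tau,0);\mathbb{R}_+)$. Assume $\lambda_0<A-\delta$, $$k_0>\int_0^{\infty}e^{-(A-\delta)s}c^m(s)\,ds,$$ and $\rho>(A-\delta)(1-\gamma)$. If $\gamma>1$ assume in addition $\frac{\varepsilon}{\eta}(1-e^{-\eta\tau})<1$ and $A-\delta>0$. Then $\mathcal C(k_0,c_0)\neq\emptyset$ and the value function $V(k_0,c_0)$ is finite. More precisely, if $\gamma\in(0,1)$ there is a constant $M_+>0$, independent of the data, with $0\le V(k_0,c_0)\le M_+k_0^{1-\gamma}$; if $\gamma>1$ then $-\infty<V(k_0,c_0)\le 0$.
   Context: Fixed parameters: $A>0$, $\delta>0$, $\rho>0$, $\gamma>0$, $\gamma\neq1$, $\varepsilon>0$, $\eta>0$, $\tau>0$. For $c\in L^1_{loc}([0,\infty);\mathbb{R}_+)$, $\widetilde c$ is its concatenation with $c_0$ ($\widetilde c=c_0$ on $[-\tau,0)$, $\widetilde c=c$ on $[0,\infty)$); $h(t)=\varepsilon\int_{t-\tau}^{t}\widetilde c(u)e^{\eta(u-t)}du$; $k(t)=k_0e^{(A-\delta)t}-\int_0^te^{(A-\delta)(t-u)}c(u)du$. Admissible set: $\mathcal C(k_0,c_0)=\{c\in L^1_{loc}([0,\infty);\mathbb{R}_+): k(t)\ge0\ \forall t,\ c(t)\ge h(t)\ge0\text{ a.e.}\}$. Objective: $J(k_0,c_0;c)=\int_0^\infty\frac{(c(t)-h(t))^{1-\gamma}}{1-\gamma}e^{-\rho t}dt$ (with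 integrand $-\infty$ where the base is not positive and $\gamma>1$); value function $V(k_0,c_0)=\sup_{c\in\mathcal C(k_0,c_0)}J(k_0,c_0;c)$. $c^m$ is the unique solution of $c^m(t)=\varepsilon\int_{t-\tau}^t\widetilde c^{\,m}(u)e^{\eta(u-t)}du$, $t\ge 0$, and $\lambda_0$ is the unique real root of $1=\varepsilon\int_{-\tau}^0e^{(\lambda+\eta)u}du$. *)

theory Defs
  imports "HOL-Analysis.Analysis"
begin

definition concat :: "(real \<Rightarrow> real) \<Rightarrow> (real \<Rightarrow> real) \<Rightarrow> real \<Rightarrow> real" where
  "concat c0 c u = (if u < 0 then c0 u else c u)"

definition hab :: "real \<Rightarrow> real \<Rightarrow> real \<Rightarrow> (real \<Rightarrow> real) \<Rightarrow> (real \<Rightarrow> real) \<Rightarrow> real \<Rightarrow> real" where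
  "hab \<epsilon> \<eta> \<tau> c0 c t =
     \<epsilon> * (LINT u:{t - \<tau>..t}|lborel. concat c0 c u * exp (\<eta> * (u - t)))"

definition capital :: "real \<Rightarrow> real \<Rightarrow> real \<Rightarrow> (real \<Rightarrow> real) \<Rightarrow> real \<Rightarrow> real" where
  "capital A \<delta> k0 c t =
     k0 * exp ((A - \<delta>) * t) - (LINT u:{0..t}|lborel. exp ((A - \<delta>) * (t - u)) * c u)"

definition admissible ::
  "real \<Rightarrow> real \<Rightarrow> real \<Rightarrow> real \<Rightarrow> real \<Rightarrow> real \<Rightarrow> (real \<Rightarrow> real) \<Rightarrow> (real \<Rightarrow> real) set" where
  "admissible A \<delta> \<epsilon> \<eta> \<tau> k0 c0 =
     {c. (\<forall>t\<ge>0. 0 \<le> c t) \<and>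
         (\<forall>T\<ge>0. set_integrable lborel {0..T} c) \<and>
         (\<forall>t\<ge>0. 0 \<le> capital A \<delta> k0 c t) \<and>
         (AE t in lborel. 0 \<le> t \<longrightarrow> hab \<epsilon> \<eta> \<tau> c0 c t \<le> c t \<and> 0 \<le> hab \<epsilon> \<eta> \<tau> c0 c t)}"

definition util :: "real \<Rightarrow> real \<Rightarrow> real" where
  "util \<gamma> x = x powr (1 - \<gamma>) / (1 - \<gamma>)"

text \<open>Objective functional (extended-real valued). For gamma<1 the integrand is
  nonnegative (on admissible controls); for gamma>1 it is nonpositive and equal to -oo
  where c - h is not positive.\<close>
definition objective ::
  "real \<Rightarrow> real \<Rightarrow> real \<Rightarrow> real \<Rightarrow> real \<Rightarrow> (real \<Rightarrow> real) \<Rightarrow> (real \<Rightarrow> real) \<Rightarrow> ereal" where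
  "objective \<gamma> \<rho> \<epsilon> \<eta> \<tau> c0 c =
     (if \<gamma> < 1 then
        enn2ereal (\<integral>\<^sup>+ t\<in>{0..}. ennreal (util \<gamma> (c t - hab \<epsilon> \<eta> \<tau> c0 c t) * exp (- \<rho> * t)) \<partial>lborel)
      else
        - enn2ereal (\<integral>\<^sup>+ t\<in>{0..}.
              (if 0 < c t - hab \<epsilon> \<eta> \<tau> c0 c t
               then ennreal (- util \<gamma> (c t - hab \<epsilon> \<eta> \<tau> c0 c t) * exp (- \<rho> * t))
               else \<infinity>) \<partial>lborel))"

definition value_fun ::
  "real \<Rightarrow> real \<Rightarrow> real \<Rightarrow> real \<Rightarrow> real \<Rightarrow> real \<Rightarrow> real \<Rightarrow> real \<Rightarrow> (real \<Rightarrow> real) \<Rightarrow> ereal" where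
  "value_fun A \<delta> \<rho> \<gamma> \<epsilon> \<eta> \<tau> k0 c0 =
     Sup (objective \<gamma> \<rho> \<epsilon> \<eta> \<tau> c0 ` admissible A \<delta> \<epsilon> \<eta> \<tau> k0 c0)"

definition cm :: "real \<Rightarrow> real \<Rightarrow> real \<Rightarrow> (real \<Rightarrow> real) \<Rightarrow> real \<Rightarrow> real" where
  "cm \<epsilon> \<eta> \<tau> c0 = (THE c. (\<forall>t<0. c t = 0) \<and>
                          (\<forall>T\<ge>0. set_integrable lborel {0..T} c) \<and>
                          (\<forall>t\<ge>0. c t = hab \<epsilon> \<eta> \<tau> c0 c t))"

definition lambda0 :: "real \<Rightarrow> real \<Rightarrow> real \<Rightarrow> real" where
  "lambda0 \<epsilon> \<eta> \<tau> = (THE l. 1 = \<epsilon> * (LINT u:{-\<tau>..0}|lborel. exp ((l + \<eta>) * u)))"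

definition data_ok :: "real \<Rightarrow> real \<Rightarrow> real \<Rightarrow> real \<Rightarrow> real \<Rightarrow> real \<Rightarrow> (real \<Rightarrow> real) \<Rightarrow> bool" where
  "data_ok A \<delta> \<epsilon> \<eta> \<tau> k0 c0 \<longleftrightarrow>
     0 < k0 \<and>
     set_integrable lborel {-\<tau>..<0} c0 \<and> (\<forall>u\<in>{-\<tau>..<0}. 0 \<le> c0 u) \<and>
     (\<integral>\<^sup>+ s\<in>{0..}. ennreal (exp (- (A - \<delta>) * s) * cm \<epsilon> \<eta> \<tau> c0 s) \<partial>lborel) < ennreal k0"

end

theory Submission
  imports Defs "HOL-Real_Asymp.Real_Asymp"
begin


definition g0 :: "real \<Rightarrow> (real\<Rightarrow>real) \<Rightarrow> real \<Rightarrow> real" where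
  "g0 \<tau> c0 u = indicator {-\<tau>..<0} u * c0 u"
definition clp :: "(real\<Rightarrow>real) \<Rightarrow> real \<Rightarrow> real" where
  "clp c u = indicator {0..} u * c u"

lemma concat_on:
  assumes "0 \<le> t" "u \<in> {t-\<tau>..t}"
  shows "concat c0 c u = g0 \<tau> c0 u + clp c u"
  using assms by (auto simp: concat_def g0_def clp_def indicator_def)

lemma hab_eq:
  assumes "0 \<le> t"
  shows "hab \<epsilon> \<eta> \<tau> c0 c t = \<epsilon> * (LINT u:{t-\<tau>..t}|lborel. (g0 \<tau> c0 u + clp c u) * exp (\<eta> * (u - t)))"
  unfolding hab_def
  by (intro arg_cong[where f="\<lambda>x. \<epsilon> * x"] set_lebesgue_integral_cong) (auto simp: concat_on[OF assms])

lemma g0_integrable: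
  assumes "set_integrable lborel {-\<tau>..<0} c0"
  shows "integrable lborel (g0 \<tau> c0)"
  using assms unfolding set_integrable_def g0_def by simp

lemma g0_nonneg: "(\<forall>u\<in>{-\<tau>..<0}. 0 \<le> c0 u) \<Longrightarrow> 0 \<le> g0 \<tau> c0 u"
  by (auto simp: g0_def indicator_def)

lemma clp_measurable:
  assumes "\<forall>T\<ge>0. set_integrable lborel {0..T} c"
  shows "clp c \<in> borel_measurable lborel"
proof (rule borel_measurable_LIMSEQ_real)
  show "(\<lambda>n. indicator {0..real n} u * c u) \<longlonglongrightarrow> clp c u" for u
  proof (rule tendsto_eventually)
    obtain N :: nat where "u \<le> real N" using real_arch_simple by blast
    then show "\<forall>\<^sub>F n in sequentially. indicator {0..real n} u * c u = clp c u"
      unfolding eventually_sequentially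
      by (intro exI[of _ N]) (auto simp: clp_def indicator_def)
  qed
  show "(\<lambda>u. indicator {0..real n} u * c u) \<in> borel_measurable lborel" for n
    using assms[rule_format, of "real n"] unfolding set_integrable_def
    by (auto dest: borel_measurable_integrable)
qed


lemma hab_integrand_integrable:
  assumes c0: "set_integrable lborel {-\<tau>..<0} c0" and c: "\<forall>T\<ge>0. set_integrable lborel {0..T} c"
    and "0 \<le> t" "0 \<le> \<eta>"
  shows "integrable lborel (\<lambda>u. indicator {t-\<tau>..t} u * ((g0 \<tau> c0 u + clp c u) * exp (\<eta> * (u - t))))"
proof (rule Bochner_Integration.integrable_bound)
  show "integrable lborel (\<lambda>u. \<bar>g0 \<tau> c0 u\<bar> + \<bar>indicator {0..t} u * c u\<bar>)"
    using g0_integrable[OF c0] c[rule_format, OF \<open>0\<le>t\<close>] unfolding set_integrable_def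
    by (intro Bochner_Integration.integrable_add integrable_abs) auto
  have "g0 \<tau> c0 \<in> borel_measurable lborel" using g0_integrable[OF c0] by (rule borel_measurable_integrable)
  moreover have "clp c \<in> borel_measurable lborel" using clp_measurable[OF c] .
  ultimately show "(\<lambda>u. indicator {t-\<tau>..t} u * ((g0 \<tau> c0 u + clp c u) * exp (\<eta> * (u - t)))) \<in> borel_measurable lborel"
    by measurable
  show "AE u in lborel. norm (indicator {t-\<tau>..t} u * ((g0 \<tau> c0 u + clp c u) * exp (\<eta> * (u - t))))
      \<le> norm (\<bar>g0 \<tau> c0 u\<bar> + \<bar>indicator {0..t} u * c u\<bar>)"
  proof (intro AE_I2)
    fix u
    show "norm (indicator {t-\<tau>..t} u * ((g0 \<tau> c0 u + clp c u) * exp (\<eta> * (u - t))))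
      \<le> norm (\<bar>g0 \<tau> c0 u\<bar> + \<bar>indicator {0..t} u * c u\<bar>)"
    proof (cases "u \<in> {t-\<tau>..t}")
      case True
      then have e: "exp (\<eta> * (u - t)) \<le> 1" "0 < exp (\<eta> * (u - t))" using \<open>0\<le>\<eta>\<close>
        by (auto simp: mult_nonneg_nonpos)
      have "\<bar>(g0 \<tau> c0 u + clp c u) * exp (\<eta> * (u - t))\<bar> \<le> \<bar>g0 \<tau> c0 u + clp c u\<bar>"
        using e by (simp add: abs_mult mult_left_le)
      also have "\<dots> \<le> \<bar>g0 \<tau> c0 u\<bar> + \<bar>indicator {0..t} u * c u\<bar>"
        using True by (auto simp: clp_def indicator_def)
      finally show ?thesis using True by simp
    qed simp
  qed
qed

lemma hab_enn:
  assumes c0: "set_integrable lborel {-\<tau>..<0} c0" "\<forall>u\<in>{-\<tau>..<0}. 0 \<le> c0 u"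
    and c: "\<forall>T\<ge>0. set_integrable lborel {0..T} c" "\<forall>t\<ge>0. 0 \<le> c t"
    and "0 \<le> t" "0 \<le> \<eta>" "0 \<le> \<epsilon>"
  shows "ennreal (hab \<epsilon> \<eta> \<tau> c0 c t) = ennreal \<epsilon> *
     (\<integral>\<^sup>+ u. ennreal (indicator {t-\<tau>..t} u * ((g0 \<tau> c0 u + clp c u) * exp (\<eta> * (u - t)))) \<partial>lborel)"
proof -
  let ?f = "\<lambda>u. indicator {t-\<tau>..t} u * ((g0 \<tau> c0 u + clp c u) * exp (\<eta> * (u - t)))"
  have int: "integrable lborel ?f" by (rule hab_integrand_integrable[OF c0(1) c(1) assms(5,6)])
  have nn: "0 \<le> ?f u" for u
    using g0_nonneg[OF c0(2)] c(2) by (auto simp: clp_def indicator_def)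
  have "(\<integral>\<^sup>+ u. ennreal (?f u) \<partial>lborel) = ennreal (integral\<^sup>L lborel ?f)"
    by (rule nn_integral_eq_integral[OF int]) (use nn in auto)
  moreover have "hab \<epsilon> \<eta> \<tau> c0 c t = \<epsilon> * integral\<^sup>L lborel ?f"
    unfolding hab_eq[OF \<open>0\<le>t\<close>] set_lebesgue_integral_def by simp
  moreover have "0 \<le> integral\<^sup>L lborel ?f" using nn by (simp add: integral_nonneg_AE)
  ultimately show ?thesis using \<open>0\<le>\<epsilon>\<close> by (simp add: ennreal_mult)
qed


definition Fop :: "real \<Rightarrow> real \<Rightarrow> real \<Rightarrow> (real\<Rightarrow>real) \<Rightarrow> (real \<Rightarrow> ennreal) \<Rightarrow> real \<Rightarrow> ennreal" where
  "Fop \<epsilon> \<eta> \<tau> c0 f t = (if t < 0 then 0 else ennreal \<epsilon> *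
     (\<integral>\<^sup>+ u. ennreal (if t - \<tau> \<le> u \<and> u \<le> t then exp (\<eta> * (u - t)) else 0) *
        (ennreal (g0 \<tau> c0 u) + (if 0 \<le> u then f u else 0)) \<partial>lborel))"

lemma Fop_mono: "(\<And>u. f u \<le> g u) \<Longrightarrow> Fop \<epsilon> \<eta> \<tau> c0 f t \<le> Fop \<epsilon> \<eta> \<tau> c0 g t"
  unfolding Fop_def
  by (auto intro!: mult_left_mono nn_integral_mono add_left_mono)

lemma Fop_measurable:
  assumes g: "g0 \<tau> c0 \<in> borel_measurable borel" and f: "f \<in> borel_measurable borel"
  shows "Fop \<epsilon> \<eta> \<tau> c0 f \<in> borel_measurable borel"
proof -
  have [measurable]: "g0 \<tau> c0 \<in> borel_measurable borel" "f \<in> borel_measurable borel" using g f by auto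
  have "(\<lambda>t. \<integral>\<^sup>+ u. ennreal (if t - \<tau> \<le> u \<and> u \<le> t then exp (\<eta> * (u - t)) else 0) *
        (ennreal (g0 \<tau> c0 u) + (if 0 \<le> u then f u else 0)) \<partial>lborel) \<in> borel_measurable borel"
    by measurable
  then show ?thesis unfolding Fop_def by measurable
qed

lemma exp_nn_int:
  fixes L B t :: real
  assumes "0 < L" "0 \<le> B" "0 \<le> t"
  shows "(\<integral>\<^sup>+ u. ennreal (indicator {0..t} u * (B * exp (L * u))) \<partial>lborel) = ennreal (B * (exp (L * t) - 1) / L)"
proof -
  have "(\<integral>\<^sup>+ u. ennreal (B * exp (L * u)) * indicator {0..t} u \<partial>lborel) =
     ennreal (B * exp (L * t) / L - B * exp (L * 0) / L)"
    by (rule nn_integral_FTC_Icc) (use assms in \<open>auto intro!: derivative_eq_intros simp: field_simps\<close>)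
  moreover have "(\<integral>\<^sup>+ u. ennreal (indicator {0..t} u * (B * exp (L * u))) \<partial>lborel) =
     (\<integral>\<^sup>+ u. ennreal (B * exp (L * u)) * indicator {0..t} u \<partial>lborel)"
    by (intro nn_integral_cong) (simp split: split_indicator)
  ultimately show ?thesis using assms
    by (simp add: diff_divide_distrib right_diff_distrib)
qed


lemma hab_nonneg:
  assumes "\<forall>u\<in>{-\<tau>..<0}. 0 \<le> c0 u" "\<forall>t\<ge>0. 0 \<le> c t" "0 \<le> t" "0 \<le> \<epsilon>"
  shows "0 \<le> hab \<epsilon> \<eta> \<tau> c0 c t"
  unfolding hab_def set_lebesgue_integral_def
  by (intro mult_nonneg_nonneg assms(4) integral_nonneg_AE AE_I2)
     (use assms in \<open>auto simp: indicator_def concat_def\<close>)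

lemma gronwall_enn:
  fixes e :: "real \<Rightarrow> real" and \<epsilon> :: real
  assumes eps: "0 < \<epsilon>" and en: "\<And>u. 0 \<le> e u"
    and ineq: "\<And>t. 0 \<le> t \<Longrightarrow> ennreal (e t) \<le> ennreal \<epsilon> * (\<integral>\<^sup>+ u. ennreal (indicator {0..t} u * e u) \<partial>lborel)"
    and fin: "\<And>T. (\<integral>\<^sup>+ u. ennreal (indicator {0..T} u * e u) \<partial>lborel) < top"
    and t: "0 \<le> t"
  shows "e t = 0"
proof -
  define L where "L = 2 * \<epsilon>"
  have L: "0 < L" using eps by (simp add: L_def)
  define K where "K = enn2real (ennreal \<epsilon> * (\<integral>\<^sup>+ u. ennreal (indicator {0..t} u * e u) \<partial>lborel))"
  have Keq: "ennreal \<epsilon> * (\<integral>\<^sup>+ u. ennreal (indicator {0..t} u * e u) \<partial>lborel) = ennreal K"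
    unfolding K_def using fin[of t] by (simp add: ennreal_mult_eq_top_iff ennreal_enn2real_if)
  have K0: "0 \<le> K" by (simp add: K_def)
  have claim: "\<forall>s\<in>{0..t}. e s \<le> K * exp (L * s) / 2 ^ n" for n
  proof (induct n)
    case 0
    show ?case
    proof
      fix s assume s: "s \<in> {0..t}"
      have "ennreal (e s) \<le> ennreal \<epsilon> * (\<integral>\<^sup>+ u. ennreal (indicator {0..s} u * e u) \<partial>lborel)"
        using s by (intro ineq) auto
      also have "\<dots> \<le> ennreal \<epsilon> * (\<integral>\<^sup>+ u. ennreal (indicator {0..t} u * e u) \<partial>lborel)"
        using s en by (intro mult_left_mono nn_integral_mono ennreal_leI) (auto simp: indicator_def)
      also have "\<dots> = ennreal K" by (rule Keq)
      finally have "e s \<le> K" using K0 by (simp add: ennreal_le_iff)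
      also have "K \<le> K * exp (L * s)" using K0 L s by (intro mult_le_cancel_left1[THEN iffD2]) auto
      finally show "e s \<le> K * exp (L * s) / 2 ^ 0" by simp
    qed
  next
    case (Suc n)
    show ?case
    proof
      fix s assume s: "s \<in> {0..t}"
      have "ennreal (e s) \<le> ennreal \<epsilon> * (\<integral>\<^sup>+ u. ennreal (indicator {0..s} u * e u) \<partial>lborel)"
        using s by (intro ineq) auto
      also have "\<dots> \<le> ennreal \<epsilon> * (\<integral>\<^sup>+ u. ennreal (indicator {0..s} u * (K / 2 ^ n * exp (L * u))) \<partial>lborel)"
      proof -
        have pw: "indicator {0..s} u * e u \<le> indicator {0..s} u * (K / 2 ^ n * exp (L * u))" for u
        proof (cases "u \<in> {0..s}")
          case True then have "e u \<le> K * exp (L * u) / 2 ^ n" using Suc s by auto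
          then show ?thesis using True by simp
        next
          case False then show ?thesis by simp
        qed
        show ?thesis by (rule mult_left_mono, rule nn_integral_mono, rule ennreal_leI, rule pw) simp
      qed
      also have "\<dots> = ennreal \<epsilon> * ennreal (K / 2 ^ n * (exp (L * s) - 1) / L)"
        using s K0 by (subst exp_nn_int[OF L]) auto
      also have "\<dots> = ennreal (\<epsilon> * (K / 2 ^ n * (exp (L * s) - 1) / L))"
      proof -
        have "0 \<le> K / 2 ^ n * (exp (L * s) - 1) / L" using K0 L s by simp
        then show ?thesis using eps by (subst ennreal_mult) auto
      qed
      also have "\<dots> \<le> ennreal (K * exp (L * s) / 2 ^ Suc n)"
      proof (rule ennreal_leI)
        have "\<epsilon> * (K / 2 ^ n * (exp (L * s) - 1) / L) = K * (exp (L * s) - 1) / 2 ^ Suc n"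
          using eps by (simp add: L_def field_simps)
        also have "\<dots> \<le> K * exp (L * s) / 2 ^ Suc n"
          using K0 by (intro divide_right_mono mult_left_mono) auto
        finally show "\<epsilon> * (K / 2 ^ n * (exp (L * s) - 1) / L) \<le> K * exp (L * s) / 2 ^ Suc n" .
      qed
      finally show "e s \<le> K * exp (L * s) / 2 ^ Suc n"
        using K0 by (simp add: ennreal_le_iff)
    qed
  qed
  have "e t \<le> 0"
  proof (rule LIMSEQ_le_const[OF LIMSEQ_divide_realpow_zero[of 2 "K * exp (L * t)"]])
    show "\<exists>N. \<forall>n\<ge>N. e t \<le> K * exp (L * t) / 2 ^ n" using claim t by auto
  qed simp
  then show ?thesis using en[of t] by simp
qed



context
  fixes \<epsilon> \<eta> \<tau> :: real and c0 :: "real \<Rightarrow> real"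
  assumes eps: "0 < \<epsilon>" and eta: "0 < \<eta>" and tau: "0 < \<tau>"
    and c0i: "set_integrable lborel {-\<tau>..<0} c0" and c0n: "\<forall>u\<in>{-\<tau>..<0}. 0 \<le> c0 u"
begin

definition "itr n = (Fop \<epsilon> \<eta> \<tau> c0 ^^ n) (\<lambda>_. 0)"
definition "fx t = (SUP n. itr n t)"

lemma g0_meas[measurable]: "g0 \<tau> c0 \<in> borel_measurable borel"
  using borel_measurable_integrable[OF g0_integrable[OF c0i]] by simp

lemma itr_Suc: "itr (Suc n) = Fop \<epsilon> \<eta> \<tau> c0 (itr n)"
  by (simp add: itr_def)

lemma itr_meas[measurable]: "itr n \<in> borel_measurable borel"
  by (induct n) (auto simp: itr_def intro!: Fop_measurable)

lemma itr_step: "itr n t \<le> itr (Suc n) t"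
proof (induct n arbitrary: t)
  case 0 show ?case by (simp add: itr_def)
next
  case (Suc n) show ?case unfolding itr_Suc[of "Suc n"] itr_Suc[of n]
    by (rule Fop_mono) (metis Suc itr_Suc)
qed

lemma itr_mono: "m \<le> n \<Longrightarrow> itr m t \<le> itr n t"
  using incseq_SucI[of "\<lambda>n. itr n t", OF itr_step] by (simp add: incseq_def)

lemma fx_meas[measurable]: "fx \<in> borel_measurable borel"
  unfolding fx_def by measurable

lemma fx_fix: "Fop \<epsilon> \<eta> \<tau> c0 fx t = fx t"
proof (cases "t < 0")
  case True
  have "itr n t = 0" for n by (cases n) (simp_all add: itr_def Fop_def True)
  then show ?thesis using True by (simp add: Fop_def fx_def)
next
  case False
  let ?E = "\<lambda>u. ennreal (if t - \<tau> \<le> u \<and> u \<le> t then exp (\<eta> * (u - t)) else 0)"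
  let ?h = "\<lambda>n u. ?E u * (ennreal (g0 \<tau> c0 u) + (if 0 \<le> u then itr n u else 0))"
  have pw: "?E u * (ennreal (g0 \<tau> c0 u) + (if 0 \<le> u then fx u else 0)) = (SUP n. ?h n u)" for u
    by (cases "0 \<le> u") (simp_all add: fx_def ennreal_SUP_add_right SUP_mult_left_ennreal)
  have inc: "incseq ?h"
    by (auto simp: incseq_def le_fun_def intro!: mult_left_mono add_left_mono itr_mono)
  have "Fop \<epsilon> \<eta> \<tau> c0 fx t = ennreal \<epsilon> * (\<integral>\<^sup>+ u. (SUP n. ?h n u) \<partial>lborel)"
    using False by (simp add: Fop_def pw)
  also have "\<dots> = ennreal \<epsilon> * (SUP n. \<integral>\<^sup>+ u. ?h n u \<partial>lborel)"
    by (subst nn_integral_monotone_convergence_SUP[OF inc]) auto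
  also have "\<dots> = (SUP n. itr (Suc n) t)"
    using False by (simp add: SUP_mult_left_ennreal itr_Suc Fop_def)
  also have "\<dots> = fx t"
    unfolding fx_def
  proof (intro antisym SUP_least)
    fix n show "itr (Suc n) t \<le> (SUP n. itr n t)" by (rule SUP_upper) simp
  next
    fix n show "itr n t \<le> (SUP n. itr (Suc n) t)"
      by (rule SUP_upper2[of n]) (auto intro: itr_step)
  qed
  finally show ?thesis .
qed


definition "C0 = integral\<^sup>L lborel (g0 \<tau> c0)"
definition "Bc = 2 * \<epsilon> * C0 + 1"

lemma g0n: "0 \<le> g0 \<tau> c0 u" using g0_nonneg[OF c0n] .

lemma C0_nn: "(\<integral>\<^sup>+ u. ennreal (g0 \<tau> c0 u) \<partial>lborel) = ennreal C0" "0 \<le> C0"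
  unfolding C0_def
  by (auto intro!: nn_integral_eq_integral g0_integrable[OF c0i] integral_nonneg_AE simp: g0n)

definition "Ls = 2 * \<epsilon>"
definition "Sup_sol u = ennreal (Bc * exp (Ls * u))"

lemma Bc_pos: "0 < Bc" using C0_nn(2) eps unfolding Bc_def by (intro add_nonneg_pos) simp_all

lemma super: "Fop \<epsilon> \<eta> \<tau> c0 Sup_sol t \<le> Sup_sol t"
proof (cases "t < 0")
  case True then show ?thesis by (simp add: Fop_def)
next
  case False
  then have t: "0 \<le> t" by simp
  have L: "0 < Ls" using eps by (simp add: Ls_def)
  let ?E = "\<lambda>u. ennreal (if t - \<tau> \<le> u \<and> u \<le> t then exp (\<eta> * (u - t)) else 0)"
  have pw: "?E u * (ennreal (g0 \<tau> c0 u) + (if 0 \<le> u then Sup_sol u else 0))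
       \<le> ennreal (g0 \<tau> c0 u) + ennreal (indicator {0..t} u * (Bc * exp (Ls * u)))" for u
  proof (cases "t - \<tau> \<le> u \<and> u \<le> t")
    case True
    then have e: "exp (\<eta> * (u - t)) \<le> 1" using eta by (auto simp: mult_nonneg_nonpos)
    have "?E u * (ennreal (g0 \<tau> c0 u) + (if 0 \<le> u then Sup_sol u else 0))
        \<le> 1 * (ennreal (g0 \<tau> c0 u) + (if 0 \<le> u then Sup_sol u else 0))"
      using True e by (intro mult_right_mono) auto
    also have "\<dots> = ennreal (g0 \<tau> c0 u) + ennreal (indicator {0..t} u * (Bc * exp (Ls * u)))"
      using True by (auto simp: Sup_sol_def indicator_def)
    finally show ?thesis .
  next
    case False
    then have "?E u = 0" by (simp only: if_not_P if_False ennreal_0)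
    then show ?thesis by simp
  qed
  have "Fop \<epsilon> \<eta> \<tau> c0 Sup_sol t \<le> ennreal \<epsilon> *
     (\<integral>\<^sup>+ u. ennreal (g0 \<tau> c0 u) + ennreal (indicator {0..t} u * (Bc * exp (Ls * u))) \<partial>lborel)"
    unfolding Fop_def using t by (auto intro!: mult_left_mono nn_integral_mono pw)
  also have "\<dots> = ennreal \<epsilon> * (ennreal C0 + ennreal (Bc * (exp (Ls * t) - 1) / Ls))"
    by (subst nn_integral_add) (auto simp: C0_nn exp_nn_int[OF L less_imp_le[OF Bc_pos] t])
  also have "\<dots> = ennreal (\<epsilon> * (C0 + Bc * (exp (Ls * t) - 1) / Ls))"
  proof -
    have "0 \<le> Bc * (exp (Ls * t) - 1) / Ls" using Bc_pos L t by simp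
    then show ?thesis using C0_nn(2) eps
      by (simp add: ennreal_mult' ennreal_plus[symmetric] del: ennreal_plus)
  qed
  also have "\<dots> \<le> Sup_sol t"
    unfolding Sup_sol_def
  proof (rule ennreal_leI)
    have "\<epsilon> * (C0 + Bc * (exp (Ls * t) - 1) / Ls) = \<epsilon> * C0 + Bc * (exp (Ls * t) - 1) / 2"
      using eps by (simp add: Ls_def field_simps)
    also have "\<dots> \<le> Bc * exp (Ls * t)"
    proof -
      have a: "\<epsilon> * C0 \<le> Bc / 2" unfolding Bc_def by simp
      have b: "0 \<le> Bc * exp (Ls * t)" using Bc_pos by simp
      have "Bc * (exp (Ls * t) - 1) / 2 = Bc * exp (Ls * t) / 2 - Bc / 2" by (simp add: field_simps)
      then show ?thesis using a b by linarith
    qed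
    finally show "\<epsilon> * (C0 + Bc * (exp (Ls * t) - 1) / Ls) \<le> Bc * exp (Ls * t)" .
  qed
  finally show ?thesis .
qed

lemma itr_le: "itr n t \<le> Sup_sol t"
proof (induct n arbitrary: t)
  case 0 show ?case by (simp add: itr_def)
next
  case (Suc n)
  have "itr (Suc n) t \<le> Fop \<epsilon> \<eta> \<tau> c0 Sup_sol t" unfolding itr_Suc by (rule Fop_mono) (rule Suc)
  also have "\<dots> \<le> Sup_sol t" by (rule super)
  finally show ?case .
qed

lemma fx_le: "fx t \<le> Sup_sol t"
  unfolding fx_def by (rule SUP_least) (rule itr_le)


definition "cmr t = (if t < 0 then 0 else enn2real (fx t))"

lemma fx_fin: "fx t < top"
  using fx_le[of t] by (simp add: Sup_sol_def top.not_eq_extremum le_less_trans)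

lemma fx_eq: "0 \<le> t \<Longrightarrow> fx t = ennreal (cmr t)"
  using fx_fin[of t] by (simp add: cmr_def ennreal_enn2real_if)

lemma cmr_nn: "0 \<le> cmr t" by (simp add: cmr_def)

lemma cmr_neg: "t < 0 \<Longrightarrow> cmr t = 0" by (simp add: cmr_def)

lemma cmr_meas[measurable]: "cmr \<in> borel_measurable borel"
  unfolding cmr_def by measurable

lemma cmr_bound: "0 \<le> t \<Longrightarrow> cmr t \<le> Bc * exp (Ls * t)"
  using fx_le[of t] fx_eq[of t] Bc_pos unfolding Sup_sol_def
  by (simp add: ennreal_le_iff)

lemma cmr_int: "set_integrable lborel {0..T} cmr"
proof (rule set_integrable_bound[where f="\<lambda>_. Bc * exp (Ls * T)"])
  show "set_integrable lborel {0..T} (\<lambda>_. Bc * exp (Ls * T))"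
    unfolding set_integrable_def
    by (intro integrable_scaleR_left integrable_real_indicator) (auto simp: emeasure_lborel_Icc_eq)
  show "set_borel_measurable lborel {0..T} cmr" unfolding set_borel_measurable_def by measurable
  show "AE x in lborel. x \<in> {0..T} \<longrightarrow> norm (cmr x) \<le> norm (Bc * exp (Ls * T))"
  proof (intro AE_I2 impI)
    fix x assume x: "x \<in> {0..T}"
    have "cmr x \<le> Bc * exp (Ls * x)" using x by (intro cmr_bound) auto
    also have "\<dots> \<le> Bc * exp (Ls * T)" using x Bc_pos eps by (auto simp: Ls_def)
    finally show "norm (cmr x) \<le> norm (Bc * exp (Ls * T))" using cmr_nn[of x] Bc_pos by simp
  qed
qed

lemma cmr_fix: "0 \<le> t \<Longrightarrow> hab \<epsilon> \<eta> \<tau> c0 cmr t = cmr t"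
proof -
  assume t: "0 \<le> t"
  have "ennreal (hab \<epsilon> \<eta> \<tau> c0 cmr t) = ennreal \<epsilon> *
     (\<integral>\<^sup>+ u. ennreal (indicator {t-\<tau>..t} u * ((g0 \<tau> c0 u + clp cmr u) * exp (\<eta> * (u - t)))) \<partial>lborel)"
    by (rule hab_enn[OF c0i c0n _ _ t]) (use cmr_int cmr_nn eta eps in auto)
  also have "\<dots> = Fop \<epsilon> \<eta> \<tau> c0 fx t"
    unfolding Fop_def using t
  proof (simp, intro arg_cong[where f="\<lambda>x. ennreal \<epsilon> * x"] nn_integral_cong)
    fix u
    show "ennreal (indicator {t-\<tau>..t} u * ((g0 \<tau> c0 u + clp cmr u) * exp (\<eta> * (u - t)))) =
      ennreal (if t - \<tau> \<le> u \<and> u \<le> t then exp (\<eta> * (u - t)) else 0) *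
        (ennreal (g0 \<tau> c0 u) + (if 0 \<le> u then fx u else 0))"
      using g0n[of u] cmr_nn[of u] fx_eq[of u]
      by (auto simp: indicator_def clp_def ennreal_mult'' ennreal_plus mult.commute)
  qed
  also have "\<dots> = fx t" by (rule fx_fix)
  also have "\<dots> = ennreal (cmr t)" by (rule fx_eq[OF t])
  moreover have "0 \<le> hab \<epsilon> \<eta> \<tau> c0 cmr t"
    by (rule hab_nonneg[OF c0n]) (use cmr_nn t eps in auto)
  ultimately show ?thesis using cmr_nn[of t] by (simp add: ennreal_inj)
qed

end


lemma ind_absdiff_integrable:
  fixes c d :: "real \<Rightarrow> real"
  assumes "set_integrable lborel {0..T} c" "set_integrable lborel {0..T} d"
  shows "integrable lborel (\<lambda>u. indicator {0..T} u * \<bar>c u - d u\<bar>)"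
proof -
  have "integrable lborel (\<lambda>u. \<bar>indicator {0..T} u * c u - indicator {0..T} u * d u\<bar>)"
  proof -
    have A: "integrable lborel (\<lambda>u. indicator {0..T} u * c u)" using assms(1) by (simp add: set_integrable_def)
    have B: "integrable lborel (\<lambda>u. indicator {0..T} u * d u)" using assms(2) by (simp add: set_integrable_def)
    show ?thesis using Bochner_Integration.integrable_diff[OF A B] by (rule integrable_abs)
  qed
  moreover have "(\<lambda>u. \<bar>indicator {0..T} u * c u - indicator {0..T} u * d u\<bar>) = (\<lambda>u. indicator {0..T} u * \<bar>c u - d u\<bar>)"
    by (auto simp: indicator_def)
  ultimately show ?thesis by simp
qed

lemma sol_unique:
  assumes eps: "0 < \<epsilon>" and eta: "0 < \<eta>" and c0i: "set_integrable lborel {-\<tau>..<0} c0"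
    and c1: "\<forall>t<0. c t = 0" and c2: "\<forall>T\<ge>0. set_integrable lborel {0..T} c" and c3: "\<forall>t\<ge>0. c t = hab \<epsilon> \<eta> \<tau> c0 c t"
    and d1: "\<forall>t<0. d t = 0" and d2: "\<forall>T\<ge>0. set_integrable lborel {0..T} d" and d3: "\<forall>t\<ge>0. d t = hab \<epsilon> \<eta> \<tau> c0 d t"
  shows "c = d"
proof
  fix t
  let ?e = "\<lambda>u. \<bar>c u - d u\<bar>"
  have ineq: "ennreal (?e t) \<le> ennreal \<epsilon> * (\<integral>\<^sup>+ u. ennreal (indicator {0..t} u * ?e u) \<partial>lborel)"
    if t: "0 \<le> t" for t
  proof -
    let ?fc = "\<lambda>u. indicator {t-\<tau>..t} u * ((g0 \<tau> c0 u + clp c u) * exp (\<eta> * (u - t)))"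
    let ?fd = "\<lambda>u. indicator {t-\<tau>..t} u * ((g0 \<tau> c0 u + clp d u) * exp (\<eta> * (u - t)))"
    let ?g = "\<lambda>u. indicator {0..t} u * ?e u"
    have ic: "integrable lborel ?fc" by (rule hab_integrand_integrable[OF c0i c2 t]) (use eta in simp)
    have id: "integrable lborel ?fd" by (rule hab_integrand_integrable[OF c0i d2 t]) (use eta in simp)
    have ig: "integrable lborel ?g" using c2 d2 t by (intro ind_absdiff_integrable) auto
    have hc: "c t = \<epsilon> * integral\<^sup>L lborel ?fc"
      using c3 t hab_eq[OF t, of \<epsilon> \<eta> \<tau> c0 c] by (simp add: set_lebesgue_integral_def)
    have hd: "d t = \<epsilon> * integral\<^sup>L lborel ?fd"
      using d3 t hab_eq[OF t, of \<epsilon> \<eta> \<tau> c0 d] by (simp add: set_lebesgue_integral_def)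
    have "c t - d t = \<epsilon> * (integral\<^sup>L lborel ?fc - integral\<^sup>L lborel ?fd)"
      unfolding hc hd by (simp add: right_diff_distrib)
    also have "\<dots> = \<epsilon> * integral\<^sup>L lborel (\<lambda>u. ?fc u - ?fd u)"
      using ic id by simp
    finally have eq: "c t - d t = \<epsilon> * integral\<^sup>L lborel (\<lambda>u. ?fc u - ?fd u)" .
    have "\<bar>integral\<^sup>L lborel (\<lambda>u. ?fc u - ?fd u)\<bar> \<le> integral\<^sup>L lborel ?g"
    proof (rule integral_abs_bound_integral)
      show "integrable lborel (\<lambda>u. ?fc u - ?fd u)" using ic id by simp
      show "integrable lborel ?g" by (rule ig)
      fix u
      show "\<bar>?fc u - ?fd u\<bar> \<le> ?g u"
      proof (cases "u \<in> {t-\<tau>..t}")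
        case True
        then have e: "exp (\<eta> * (u - t)) \<le> 1" using eta by (auto simp: mult_nonneg_nonpos)
        have "?fc u - ?fd u = (clp c u - clp d u) * exp (\<eta> * (u - t))"
          using True by (simp add: algebra_simps)
        then have "\<bar>?fc u - ?fd u\<bar> = \<bar>clp c u - clp d u\<bar> * exp (\<eta> * (u - t))"
          by (simp add: abs_mult)
        also have "\<dots> \<le> \<bar>clp c u - clp d u\<bar>" using e by (simp add: mult_left_le)
        also have "\<dots> = ?g u" using True by (auto simp: clp_def indicator_def)
        finally show ?thesis .
      qed (simp add: indicator_def)
    qed
    then have "?e t \<le> \<epsilon> * integral\<^sup>L lborel ?g" using eq eps by (simp add: abs_mult)
    moreover have "(\<integral>\<^sup>+ u. ennreal (?g u) \<partial>lborel) = ennreal (integral\<^sup>L lborel ?g)"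
      by (rule nn_integral_eq_integral[OF ig]) simp
    moreover have "0 \<le> integral\<^sup>L lborel ?g" by (simp add: integral_nonneg_AE)
    ultimately show ?thesis using eps by (simp add: ennreal_mult[symmetric] ennreal_leI)
  qed
  have fin: "(\<integral>\<^sup>+ u. ennreal (indicator {0..T} u * ?e u) \<partial>lborel) < top" for T
  proof (cases "0 \<le> T")
    case True
    have "(\<integral>\<^sup>+ u. ennreal (indicator {0..T} u * ?e u) \<partial>lborel) = ennreal (integral\<^sup>L lborel (\<lambda>u. indicator {0..T} u * ?e u))"
      using c2 d2 True by (intro nn_integral_eq_integral ind_absdiff_integrable) auto
    then show ?thesis by simp
  next
    case False then have "{0..T} = {}" by auto
    then show ?thesis by simp
  qed
  show "c t = d t"
  proof (cases "t < 0")
    case True then show ?thesis using c1 d1 by simp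
  next
    case False
    have "?e t = 0" by (rule gronwall_enn[OF eps _ ineq fin]) (use False in auto)
    then show ?thesis by simp
  qed
qed



lemma cm_is_cmr:
  assumes eps: "0 < \<epsilon>" and eta: "0 < \<eta>" and tau: "0 < \<tau>"
    and c0i: "set_integrable lborel {-\<tau>..<0} c0" and c0n: "\<forall>u\<in>{-\<tau>..<0}. 0 \<le> c0 u"
  shows "cm \<epsilon> \<eta> \<tau> c0 = cmr \<epsilon> \<eta> \<tau> c0"
  unfolding cm_def
proof (rule the1_equality)
  let ?P = "\<lambda>c. (\<forall>t<0. c t = 0) \<and> (\<forall>T\<ge>0. set_integrable lborel {0..T} c) \<and> (\<forall>t\<ge>0. c t = hab \<epsilon> \<eta> \<tau> c0 c t)"
  show "?P (cmr \<epsilon> \<eta> \<tau> c0)"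
    using cmr_int[OF eps eta tau c0i c0n] cmr_fix[OF eps eta tau c0i c0n] cmr_neg[OF eps eta tau c0i c0n]
    by auto
  then show "\<exists>!c. ?P c"
    using sol_unique[OF eps eta c0i] by blast
qed

lemma cm_props:
  assumes eps: "0 < \<epsilon>" and eta: "0 < \<eta>" and tau: "0 < \<tau>"
    and c0i: "set_integrable lborel {-\<tau>..<0} c0" and c0n: "\<forall>u\<in>{-\<tau>..<0}. 0 \<le> c0 u"
  shows "\<forall>T\<ge>0. set_integrable lborel {0..T} (cm \<epsilon> \<eta> \<tau> c0)"
    "\<forall>t\<ge>0. hab \<epsilon> \<eta> \<tau> c0 (cm \<epsilon> \<eta> \<tau> c0) t = cm \<epsilon> \<eta> \<tau> c0 t"
    "\<forall>t. 0 \<le> cm \<epsilon> \<eta> \<tau> c0 t"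
    "cm \<epsilon> \<eta> \<tau> c0 \<in> borel_measurable borel"
  unfolding cm_is_cmr[OF assms]
  using cmr_int[OF assms] cmr_fix[OF assms] cmr_nn[OF assms] cmr_meas[OF assms] by auto



lemma weighted_set_integrable:
  fixes c :: "real \<Rightarrow> real"
  assumes ci: "set_integrable lborel {0..t} c"
  shows "set_integrable lborel {0..t} (\<lambda>u. exp (b * u) * c u)"
proof (rule set_integrable_bound[where f="\<lambda>u. exp (\<bar>b\<bar> * t) * c u"])
  show "set_integrable lborel {0..t} (\<lambda>u. exp (\<bar>b\<bar> * t) * c u)" using ci by simp
  have m: "(\<lambda>x. indicator {0..t} x * c x) \<in> borel_measurable lborel"
    using borel_measurable_integrable[OF ci[unfolded set_integrable_def]] by simp
  have "(\<lambda>x. exp (b * x) * (indicator {0..t} x * c x)) \<in> borel_measurable lborel"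
    using m by measurable
  then show "set_borel_measurable lborel {0..t} (\<lambda>u. exp (b * u) * c u)"
    unfolding set_borel_measurable_def by (simp add: mult_ac)
  show "AE x in lborel. x \<in> {0..t} \<longrightarrow> norm (exp (b * x) * c x) \<le> norm (exp (\<bar>b\<bar> * t) * c x)"
  proof (intro AE_I2 impI)
    fix x assume x: "x \<in> {0..t}"
    have "b * x \<le> \<bar>b\<bar> * t" using x
      by (metis abs_ge_self abs_mult abs_of_nonneg atLeastAtMost_iff dual_order.trans mult_left_mono abs_ge_zero)
    then have "exp (b * x) \<le> exp (\<bar>b\<bar> * t)" by simp
    then show "norm (exp (b * x) * c x) \<le> norm (exp (\<bar>b\<bar> * t) * c x)"
      by (simp add: abs_mult mult_right_mono)
  qed
qed

lemma capital_eq: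
  fixes c :: "real \<Rightarrow> real"
  shows "capital A \<delta> k0 c t = exp ((A - \<delta>) * t) * (k0 - (LINT u:{0..t}|lborel. exp (- (A - \<delta>) * u) * c u))"
proof -
  have "(LINT u:{0..t}|lborel. exp ((A - \<delta>) * (t - u)) * c u) =
      (LINT u:{0..t}|lborel. exp ((A - \<delta>) * t) * (exp (- (A - \<delta>) * u) * c u))"
    proof (intro set_lebesgue_integral_cong allI impI)
    fix u
    have "exp ((A - \<delta>) * (t - u)) = exp ((A - \<delta>) * t) * exp (- (A - \<delta>) * u)"
      by (simp add: mult_exp_exp algebra_simps)
    then show "exp ((A - \<delta>) * (t - u)) * c u = exp ((A - \<delta>) * t) * (exp (- (A - \<delta>) * u) * c u)" by simp
  qed simp
  then show ?thesis unfolding capital_def by (simp add: right_diff_distrib mult.commute)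
qed

lemma weighted_nn:
  fixes c :: "real \<Rightarrow> real"
  assumes ci: "set_integrable lborel {0..t} c" and cn: "\<And>u. 0 \<le> u \<Longrightarrow> 0 \<le> c u"
  shows "(\<integral>\<^sup>+ u. ennreal (indicator {0..t} u * (exp (b * u) * c u)) \<partial>lborel) =
      ennreal (LINT u:{0..t}|lborel. exp (b * u) * c u)"
proof -
  have "integrable lborel (\<lambda>u. indicator {0..t} u * (exp (b * u) * c u))"
    using weighted_set_integrable[OF ci, of b] unfolding set_integrable_def by simp
  then have "(\<integral>\<^sup>+ u. ennreal (indicator {0..t} u * (exp (b * u) * c u)) \<partial>lborel) =
      ennreal (integral\<^sup>L lborel (\<lambda>u. indicator {0..t} u * (exp (b * u) * c u)))"
    by (rule nn_integral_eq_integral) (auto simp: indicator_def cn)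
  then show ?thesis by (simp add: set_lebesgue_integral_def)
qed

lemma capital_nonneg_iff:
  fixes c :: "real \<Rightarrow> real"
  assumes ci: "set_integrable lborel {0..t} c" and cn: "\<And>u. 0 \<le> u \<Longrightarrow> 0 \<le> c u" and k0: "0 \<le> k0"
  shows "0 \<le> capital A \<delta> k0 c t \<longleftrightarrow>
    (\<integral>\<^sup>+ u. ennreal (indicator {0..t} u * (exp (- (A - \<delta>) * u) * c u)) \<partial>lborel) \<le> ennreal k0"
proof -
  have e: "(\<integral>\<^sup>+ u. ennreal (indicator {0..t} u * (exp (- (A - \<delta>) * u) * c u)) \<partial>lborel) =
      ennreal (LINT u:{0..t}|lborel. exp (- (A - \<delta>) * u) * c u)"
    by (rule weighted_nn[OF ci cn])
  show ?thesis unfolding capital_eq e using k0 by (simp add: zero_le_mult_iff ennreal_le_iff)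
qed



lemma total_weighted_le:
  fixes c :: "real \<Rightarrow> real"
  assumes ci: "\<forall>T\<ge>0. set_integrable lborel {0..T} c" and cn: "\<forall>t\<ge>0. 0 \<le> c t"
    and cap: "\<forall>t\<ge>0. 0 \<le> capital A \<delta> k0 c t" and k0: "0 \<le> k0"
  shows "(\<integral>\<^sup>+ u. ennreal (exp (- (A - \<delta>) * u) * c u) * indicator {0..} u \<partial>lborel) \<le> ennreal k0"
proof -
  let ?f = "\<lambda>n u. ennreal (indicator {0..real n} u * (exp (- (A - \<delta>) * u) * c u))"
  have meas: "?f n \<in> borel_measurable lborel" for n
  proof -
    have "(\<lambda>u. indicator {0..real n} u * c u) \<in> borel_measurable lborel"
      using borel_measurable_integrable[OF ci[rule_format, of "real n", unfolded set_integrable_def]] by simp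
    then have "(\<lambda>u. exp (- (A - \<delta>) * u) * (indicator {0..real n} u * c u)) \<in> borel_measurable lborel"
      by measurable
    then show ?thesis by (simp add: mult_ac)
  qed
  have inc: "incseq ?f"
    unfolding incseq_def le_fun_def
    using cn by (auto intro!: ennreal_leI mult_right_mono simp: indicator_def)
  have sup: "(SUP n. ?f n u) = ennreal (exp (- (A - \<delta>) * u) * c u) * indicator {0..} u" for u
  proof (cases "0 \<le> u")
    case True
    obtain N :: nat where N: "u \<le> real N" using real_arch_simple by blast
    show ?thesis
    proof (rule antisym)
      show "(SUP n. ?f n u) \<le> ennreal (exp (- (A - \<delta>) * u) * c u) * indicator {0..} u"
        using True cn by (intro SUP_least) (auto intro!: ennreal_leI simp: indicator_def)
      show "ennreal (exp (- (A - \<delta>) * u) * c u) * indicator {0..} u \<le> (SUP n. ?f n u)"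
        using True N by (intro SUP_upper2[of N]) (auto simp: indicator_def)
    qed
  next
    case False then show ?thesis by (simp add: indicator_def)
  qed
  have "(\<integral>\<^sup>+ u. ennreal (exp (- (A - \<delta>) * u) * c u) * indicator {0..} u \<partial>lborel) = (SUP n. integral\<^sup>N lborel (?f n))"
    unfolding sup[symmetric] by (rule nn_integral_monotone_convergence_SUP[OF inc meas])
  also have "\<dots> \<le> ennreal k0"
  proof (rule SUP_least)
    fix n
    have c1: "set_integrable lborel {0..real n} c" using ci by simp
    have c2: "\<And>u. 0 \<le> u \<Longrightarrow> 0 \<le> c u" using cn by simp
    have "0 \<le> capital A \<delta> k0 c (real n)" using cap by simp
    then show "integral\<^sup>N lborel (?f n) \<le> ennreal k0"
      using capital_nonneg_iff[OF c1 c2 k0] by simp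
  qed
  finally show ?thesis .
qed



lemma young_pt:
  fixes \<gamma> s \<beta> \<rho> a x c t :: real
  assumes g: "0 < \<gamma>" "\<gamma> < 1" and s: "0 < s" and b: "0 < \<beta>"
    and rdef: "\<beta> * \<gamma> = \<rho> - a * (1 - \<gamma>)" and x: "0 \<le> x" "x \<le> c"
  shows "util \<gamma> x * exp (- \<rho> * t) \<le> exp (- a * t) * c / s powr \<gamma> + \<gamma> * s / ((1 - \<gamma>) * s powr \<gamma>) * exp (- \<beta> * t)"
proof -
  define p where "p = 1 - \<gamma>"
  have p: "0 < p" "p + \<gamma> = 1" using g by (auto simp: p_def)
  define Y where "Y = exp (- a * t) * c"
  define Z where "Z = s * exp (- \<beta> * t)"
  have Y0: "0 \<le> Y" using x by (simp add: Y_def)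
  have Z0: "0 < Z" using s by (simp add: Z_def)
  have young: "Y powr p * Z powr \<gamma> \<le> p * Y + \<gamma> * Z"
  proof (cases "Y = 0")
    case True then show ?thesis using Z0 g by simp
  next
    case False then show ?thesis using Youngs_inequality_0[of p \<gamma> Y Z] p Y0 Z0 g by simp
  qed
  have cY: "c = Y * exp (a * t)" by (simp add: Y_def mult_exp_exp)
  have "c powr p * exp (- \<rho> * t) = Y powr p * exp (a * t * p - \<rho> * t)"
    unfolding cY powr_mult exp_powr_real by (simp add: mult_exp_exp)
  also have "a * t * p - \<rho> * t = - \<beta> * t * \<gamma>" using arg_cong[OF rdef, of "\<lambda>z. z * t"] by (simp add: p_def algebra_simps)
  also have "Y powr p * exp (- \<beta> * t * \<gamma>) = Y powr p * Z powr \<gamma> / s powr \<gamma>"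
    using s by (simp add: Z_def powr_mult exp_powr_real)
  also have "\<dots> \<le> (p * Y + \<gamma> * Z) / s powr \<gamma>"
    using young s by (simp add: divide_right_mono)
  finally have main: "c powr p * exp (- \<rho> * t) \<le> (p * Y + \<gamma> * Z) / s powr \<gamma>" .
  have "util \<gamma> x * exp (- \<rho> * t) = x powr p * exp (- \<rho> * t) / p"
    by (simp add: util_def p_def)
  also have "\<dots> \<le> c powr p * exp (- \<rho> * t) / p"
    using x p by (intro divide_right_mono mult_right_mono powr_mono2) auto
  also have "\<dots> \<le> (p * Y + \<gamma> * Z) / s powr \<gamma> / p"
    using main p by (intro divide_right_mono) auto
  also have "\<dots> = exp (- a * t) * c / s powr \<gamma> + \<gamma> * s / ((1 - \<gamma>) * s powr \<gamma>) * exp (- \<beta> * t)"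
    using p s by (simp add: Y_def Z_def p_def field_simps)
  finally show ?thesis .
qed



lemma exp_tail:
  fixes \<beta> K :: real
  assumes "0 < \<beta>" "0 \<le> K"
  shows "(\<integral>\<^sup>+ t. ennreal (K * exp (- \<beta> * t)) * indicator {0..} t \<partial>lborel) = ennreal (K / \<beta>)"
proof -
  have "(\<integral>\<^sup>+ t. ennreal (K * exp (- \<beta> * t)) * indicator {0..} t \<partial>lborel) =
      ennreal (0 - (- K * exp (- \<beta> * 0) / \<beta>))"
  proof (rule nn_integral_FTC_atLeast)
    show "(\<lambda>t. K * exp (- \<beta> * t)) \<in> borel_measurable borel" by measurable
    show "((\<lambda>t. - K * exp (- \<beta> * t) / \<beta>) has_real_derivative K * exp (- \<beta> * x)) (at x)" for x
      using assms by (auto intro!: derivative_eq_intros simp: field_simps)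
    show "0 \<le> K * exp (- \<beta> * x)" for x using assms by simp
    show "((\<lambda>t. - K * exp (- \<beta> * t) / \<beta>) \<longlongrightarrow> 0) at_top" using assms by real_asymp
  qed
  then show ?thesis by simp
qed



lemma gamma_lt1_bound:
  fixes A \<delta> \<rho> \<gamma> \<epsilon> \<eta> \<tau> k0 :: real
  assumes g: "0 < \<gamma>" "\<gamma> < 1" and rho: "\<rho> > (A - \<delta>) * (1 - \<gamma>)" and k0: "0 < k0"
    and c: "c \<in> admissible A \<delta> \<epsilon> \<eta> \<tau> k0 c0"
  shows "objective \<gamma> \<rho> \<epsilon> \<eta> \<tau> c0 c \<le>
     ereal (((\<rho> - (A - \<delta>) * (1 - \<gamma>)) / \<gamma>) powr (- \<gamma>) / (1 - \<gamma>) * k0 powr (1 - \<gamma>))"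
proof -
  define a where "a = A - \<delta>"
  define p where "p = 1 - \<gamma>"
  define \<beta> where "\<beta> = (\<rho> - a * p) / \<gamma>"
  define s where "s = k0 * \<beta>"
  define K where "K = \<gamma> * s / (p * s powr \<gamma>)"
  have p: "0 < p" using g by (simp add: p_def)
  have b: "0 < \<beta>" using rho g by (simp add: \<beta>_def a_def p_def)
  have s: "0 < s" using k0 b by (simp add: s_def)
  have K: "0 \<le> K" using g s p by (simp add: K_def)
  have rdef: "\<beta> * \<gamma> = \<rho> - a * (1 - \<gamma>)" using g by (simp add: \<beta>_def p_def)
  have c1: "\<forall>t\<ge>0. 0 \<le> c t" and c2: "\<forall>T\<ge>0. set_integrable lborel {0..T} c"
    and c3: "\<forall>t\<ge>0. 0 \<le> capital A \<delta> k0 c t"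
    and c4: "AE t in lborel. 0 \<le> t \<longrightarrow> hab \<epsilon> \<eta> \<tau> c0 c t \<le> c t \<and> 0 \<le> hab \<epsilon> \<eta> \<tau> c0 c t"
    using c by (auto simp: admissible_def)
  let ?h = "hab \<epsilon> \<eta> \<tau> c0 c"
  let ?f = "\<lambda>t. ennreal (exp (- a * t) * clp c t)"
  have fmeas: "?f \<in> borel_measurable lborel"
    using clp_measurable[OF c2] by measurable
  have pw: "AE t in lborel. ennreal (util \<gamma> (c t - ?h t) * exp (- \<rho> * t)) * indicator {0..} t \<le>
      ennreal (1 / s powr \<gamma>) * ?f t + ennreal (K * exp (- \<beta> * t)) * indicator {0..} t"
  proof (rule AE_mp[OF c4], intro AE_I2 impI)
    fix t assume ht: "0 \<le> t \<longrightarrow> ?h t \<le> c t \<and> 0 \<le> ?h t"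
    show "ennreal (util \<gamma> (c t - ?h t) * exp (- \<rho> * t)) * indicator {0..} t \<le>
      ennreal (1 / s powr \<gamma>) * ?f t + ennreal (K * exp (- \<beta> * t)) * indicator {0..} t"
    proof (cases "0 \<le> t")
      case True
      have x: "0 \<le> c t - ?h t" "c t - ?h t \<le> c t" using ht True by auto
      have "util \<gamma> (c t - ?h t) * exp (- \<rho> * t) \<le> exp (- a * t) * c t / s powr \<gamma> + K * exp (- \<beta> * t)"
        using young_pt[OF g s b rdef x, of t] by (simp add: K_def p_def)
      then have "ennreal (util \<gamma> (c t - ?h t) * exp (- \<rho> * t)) \<le>
          ennreal (exp (- a * t) * c t / s powr \<gamma>) + ennreal (K * exp (- \<beta> * t))"
        using c1 True K s by (simp add: ennreal_plus[symmetric] ennreal_leI del: ennreal_plus)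
      also have "ennreal (exp (- a * t) * c t / s powr \<gamma>) = ennreal (1 / s powr \<gamma>) * ?f t"
        using c1 True s by (simp add: clp_def ennreal_mult[symmetric])
      finally show ?thesis using True by simp
    qed simp
  qed
  have "(\<integral>\<^sup>+ t. ennreal (util \<gamma> (c t - ?h t) * exp (- \<rho> * t)) * indicator {0..} t \<partial>lborel) \<le>
      (\<integral>\<^sup>+ t. ennreal (1 / s powr \<gamma>) * ?f t + ennreal (K * exp (- \<beta> * t)) * indicator {0..} t \<partial>lborel)"
    by (rule nn_integral_mono_AE[OF pw])
  also have "\<dots> = ennreal (1 / s powr \<gamma>) * (\<integral>\<^sup>+ t. ?f t \<partial>lborel) +
      (\<integral>\<^sup>+ t. ennreal (K * exp (- \<beta> * t)) * indicator {0..} t \<partial>lborel)"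
    using fmeas by (subst nn_integral_add) (auto simp: nn_integral_cmult)
  also have "(\<integral>\<^sup>+ t. ?f t \<partial>lborel) = (\<integral>\<^sup>+ u. ennreal (exp (- (A - \<delta>) * u) * c u) * indicator {0..} u \<partial>lborel)"
    by (intro nn_integral_cong) (simp add: clp_def a_def indicator_def)
  also have "\<dots> \<le> ennreal k0"
    by (rule total_weighted_le[OF c2 c1 c3]) (use k0 in simp)
  also have "(\<integral>\<^sup>+ t. ennreal (K * exp (- \<beta> * t)) * indicator {0..} t \<partial>lborel) = ennreal (K / \<beta>)"
    by (rule exp_tail[OF b K])
  finally have bnd: "(\<integral>\<^sup>+ t. ennreal (util \<gamma> (c t - ?h t) * exp (- \<rho> * t)) * indicator {0..} t \<partial>lborel) \<le>
      ennreal (1 / s powr \<gamma>) * ennreal k0 + ennreal (K / \<beta>)"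
    by (simp add: mult_left_mono add_right_mono)
  have val: "1 / s powr \<gamma> * k0 + K / \<beta> = ((\<rho> - (A - \<delta>) * (1 - \<gamma>)) / \<gamma>) powr (- \<gamma>) / (1 - \<gamma>) * k0 powr (1 - \<gamma>)"
  proof -
    have S: "0 < s powr \<gamma>" using s by simp
    have pg: "p + \<gamma> = 1" by (simp add: p_def)
    have "K / \<beta> = \<gamma> * k0 / (p * s powr \<gamma>)" unfolding K_def using b by (simp add: s_def field_simps)
    moreover have "1 / s powr \<gamma> * k0 = p * k0 / (p * s powr \<gamma>)" using p S by simp
    ultimately have "1 / s powr \<gamma> * k0 + K / \<beta> = (p * k0 + \<gamma> * k0) / (p * s powr \<gamma>)"
      by (simp add: add_divide_distrib)
    also have "\<dots> = (p + \<gamma>) * k0 / (p * s powr \<gamma>)" by (simp add: distrib_right)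
    also have "\<dots> = k0 / (p * s powr \<gamma>)" using pg by simp
    also have "\<dots> = \<beta> powr (- \<gamma>) / p * k0 powr (1 - \<gamma>)"
      using k0 b p unfolding s_def
      by (simp add: powr_mult powr_minus powr_diff field_simps)
    finally show ?thesis by (simp add: \<beta>_def a_def p_def)
  qed
  have "ennreal (1 / s powr \<gamma>) * ennreal k0 + ennreal (K / \<beta>) = ennreal (1 / s powr \<gamma> * k0 + K / \<beta>)"
    using k0 s K b by (simp add: ennreal_mult[symmetric] ennreal_plus[symmetric] del: ennreal_plus)
  with bnd val have bnd2: "(\<integral>\<^sup>+ t. ennreal (util \<gamma> (c t - ?h t) * exp (- \<rho> * t)) * indicator {0..} t \<partial>lborel) \<le>
      ennreal (((\<rho> - (A - \<delta>) * (1 - \<gamma>)) / \<gamma>) powr (- \<gamma>) / (1 - \<gamma>) * k0 powr (1 - \<gamma>))" by simp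
  have nn: "0 \<le> ((\<rho> - (A - \<delta>) * (1 - \<gamma>)) / \<gamma>) powr (- \<gamma>) / (1 - \<gamma>) * k0 powr (1 - \<gamma>)"
    using g by simp
  have "enn2ereal (\<integral>\<^sup>+ t. ennreal (util \<gamma> (c t - ?h t) * exp (- \<rho> * t)) * indicator {0..} t \<partial>lborel) \<le>
     enn2ereal (ennreal (((\<rho> - (A - \<delta>) * (1 - \<gamma>)) / \<gamma>) powr (- \<gamma>) / (1 - \<gamma>) * k0 powr (1 - \<gamma>)))"
    using bnd2 by (simp only: less_eq_ennreal.rep_eq[symmetric])
  then show ?thesis unfolding objective_def using g nn by simp
qed



lemma data_okD:
  assumes "data_ok A \<delta> \<epsilon> \<eta> \<tau> k0 c0"
  shows "0 < k0" "set_integrable lborel {-\<tau>..<0} c0" "\<forall>u\<in>{-\<tau>..<0}. 0 \<le> c0 u"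
    "(\<integral>\<^sup>+ s. ennreal (exp (- (A - \<delta>) * s) * cm \<epsilon> \<eta> \<tau> c0 s) * indicator {0..} s \<partial>lborel) < ennreal k0"
  using assms unfolding data_ok_def by auto

lemma cm_capital:
  assumes eps: "0 < \<epsilon>" and eta: "0 < \<eta>" and tau: "0 < \<tau>" and d: "data_ok A \<delta> \<epsilon> \<eta> \<tau> k0 c0"
    and t: "0 \<le> t"
  shows "0 \<le> capital A \<delta> k0 (cm \<epsilon> \<eta> \<tau> c0) t"
proof -
  note D = data_okD[OF d]
  note P = cm_props[OF eps eta tau D(2,3)]
  have ci: "set_integrable lborel {0..t} (cm \<epsilon> \<eta> \<tau> c0)" using P(1) t by simp
  have cn: "\<And>u. 0 \<le> u \<Longrightarrow> 0 \<le> cm \<epsilon> \<eta> \<tau> c0 u" using P(3) by simp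
  have "(\<integral>\<^sup>+ u. ennreal (indicator {0..t} u * (exp (- (A - \<delta>) * u) * cm \<epsilon> \<eta> \<tau> c0 u)) \<partial>lborel) \<le>
      (\<integral>\<^sup>+ s. ennreal (exp (- (A - \<delta>) * s) * cm \<epsilon> \<eta> \<tau> c0 s) * indicator {0..} s \<partial>lborel)"
    by (intro nn_integral_mono) (auto simp: indicator_def)
  also have "\<dots> \<le> ennreal k0" using D(4) by simp
  finally show ?thesis using capital_nonneg_iff[OF ci cn, of k0 A \<delta>] D(1) by simp
qed

lemma cm_admissible:
  assumes eps: "0 < \<epsilon>" and eta: "0 < \<eta>" and tau: "0 < \<tau>" and d: "data_ok A \<delta> \<epsilon> \<eta> \<tau> k0 c0"
  shows "cm \<epsilon> \<eta> \<tau> c0 \<in> admissible A \<delta> \<epsilon> \<eta> \<tau> k0 c0"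
proof -
  note D = data_okD[OF d]
  note P = cm_props[OF eps eta tau D(2,3)]
  show ?thesis unfolding admissible_def
    using P cm_capital[OF eps eta tau d] by auto
qed



lemma exp_window:
  fixes \<eta> \<tau> t B :: real
  assumes "0 < \<eta>" "0 < \<tau>" "0 \<le> B"
  shows "(\<integral>\<^sup>+ u. ennreal (indicator {t-\<tau>..t} u * (B * exp (\<eta> * (u - t)))) \<partial>lborel) = ennreal (B * (1 - exp (- \<eta> * \<tau>)) / \<eta>)"
proof -
  have "(\<integral>\<^sup>+ u. ennreal (B * exp (\<eta> * (u - t))) * indicator {t-\<tau>..t} u \<partial>lborel) =
     ennreal (B * exp (\<eta> * (t - t)) / \<eta> - B * exp (\<eta> * ((t - \<tau>) - t)) / \<eta>)"
  proof (rule nn_integral_FTC_Icc)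
    show "(\<lambda>u. B * exp (\<eta> * (u - t))) \<in> borel_measurable borel" by measurable
    show "((\<lambda>u. B * exp (\<eta> * (u - t)) / \<eta>) has_real_derivative B * exp (\<eta> * (x - t))) (at x)" for x
      using assms by (auto intro!: derivative_eq_intros simp: field_simps)
    show "0 \<le> B * exp (\<eta> * (x - t))" for x using assms by simp
    show "t - \<tau> \<le> t" using assms by simp
  qed
  moreover have "(\<integral>\<^sup>+ u. ennreal (indicator {t-\<tau>..t} u * (B * exp (\<eta> * (u - t)))) \<partial>lborel) =
     (\<integral>\<^sup>+ u. ennreal (B * exp (\<eta> * (u - t))) * indicator {t-\<tau>..t} u \<partial>lborel)"
    by (intro nn_integral_cong) (simp split: split_indicator)
  moreover have "B * exp (\<eta> * (t - t)) / \<eta> - B * exp (\<eta> * ((t - \<tau>) - t)) / \<eta> = B * (1 - exp (- \<eta> * \<tau>)) / \<eta>"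
    by (simp add: diff_divide_distrib right_diff_distrib)
  ultimately show ?thesis by simp
qed

lemma c1_control:
  assumes eps: "0 < \<epsilon>" and eta: "0 < \<eta>" and tau: "0 < \<tau>" and d: "data_ok A \<delta> \<epsilon> \<eta> \<tau> k0 c0"
    and a: "0 < A - \<delta>" and q: "\<epsilon> / \<eta> * (1 - exp (- \<eta> * \<tau>)) < 1"
  shows "\<exists>c m. c \<in> admissible A \<delta> \<epsilon> \<eta> \<tau> k0 c0 \<and> 0 < m \<and> (\<forall>t\<ge>0. m \<le> c t - hab \<epsilon> \<eta> \<tau> c0 c t)"
proof -
  note D = data_okD[OF d]
  note P = cm_props[OF eps eta tau D(2,3)]
  let ?cm = "cm \<epsilon> \<eta> \<tau> c0"
  define Ie where "Ie = (\<integral>\<^sup>+ s. ennreal (exp (- (A - \<delta>) * s) * ?cm s) * indicator {0..} s \<partial>lborel)"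
  define I where "I = enn2real Ie"
  have Iek: "Ie < ennreal k0" using D(4) unfolding Ie_def .
  then have Ietop: "Ie \<noteq> top" using ennreal_less_top[of k0] by (metis less_trans less_irrefl)
  have IeI: "Ie = ennreal I" unfolding I_def using Ietop by (simp add: ennreal_enn2real_if)
  have I0: "0 \<le> I" by (simp add: I_def)
  have Ik: "I < k0" using Iek I0 unfolding IeI by (simp add: ennreal_less_iff)
  define B where "B = (A - \<delta>) * (k0 - I) / 2"
  have B: "0 < B" using a Ik by (simp add: B_def)
  define q where "q = \<epsilon> / \<eta> * (1 - exp (- \<eta> * \<tau>))"
  have q0: "0 \<le> q" using eps eta tau by (simp add: q_def)
  define c1 where "c1 = (\<lambda>t. ?cm t + B)"
  have c1n: "\<forall>t\<ge>0. 0 \<le> c1 t" using P(3) B by (simp add: c1_def add_nonneg_nonneg less_imp_le)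
  have c1i: "\<forall>T\<ge>0. set_integrable lborel {0..T} c1"
  proof (intro allI impI)
    fix T :: real assume T: "0 \<le> T"
    have "set_integrable lborel {0..T} (\<lambda>_. B)"
      unfolding set_integrable_def
      by (intro integrable_scaleR_left integrable_real_indicator) (auto simp: emeasure_lborel_Icc_eq)
    then show "set_integrable lborel {0..T} c1"
      unfolding c1_def using P(1) T by (intro set_integral_add) auto
  qed
  have cmm[measurable]: "?cm \<in> borel_measurable borel" by (rule P(4))
  have cap: "\<forall>t\<ge>0. 0 \<le> capital A \<delta> k0 c1 t"
  proof (intro allI impI)
    fix t :: real assume t: "0 \<le> t"
    have ci: "set_integrable lborel {0..t} c1" using c1i t by simp
    have cn: "\<And>u. 0 \<le> u \<Longrightarrow> 0 \<le> c1 u" using c1n by simp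
    have "(\<integral>\<^sup>+ u. ennreal (indicator {0..t} u * (exp (- (A - \<delta>) * u) * c1 u)) \<partial>lborel) \<le>
        (\<integral>\<^sup>+ u. ennreal (exp (- (A - \<delta>) * u) * ?cm u) * indicator {0..} u +
              ennreal (B * exp (- (A - \<delta>) * u)) * indicator {0..} u \<partial>lborel)"
    proof (intro nn_integral_mono)
      fix u
      show "ennreal (indicator {0..t} u * (exp (- (A - \<delta>) * u) * c1 u)) \<le>
         ennreal (exp (- (A - \<delta>) * u) * ?cm u) * indicator {0..} u +
              ennreal (B * exp (- (A - \<delta>) * u)) * indicator {0..} u"
      proof (cases "u \<in> {0..t}")
        case True
        then show ?thesis using P(3)[rule_format, of u] B
          by (simp add: c1_def ring_distribs ennreal_plus[symmetric] del: ennreal_plus)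
      qed (simp add: indicator_def)
    qed
    also have "\<dots> = Ie + ennreal (B / (A - \<delta>))"
      unfolding Ie_def using exp_tail[OF a less_imp_le[OF B]]
      by (subst nn_integral_add) auto
    also have "\<dots> = ennreal (I + B / (A - \<delta>))" using I0 B a by (simp add: IeI ennreal_plus)
    also have "\<dots> \<le> ennreal k0"
    proof (intro ennreal_leI)
      have "B = (A - \<delta>) * ((k0 - I) / 2)" by (simp add: B_def)
      then have "B / (A - \<delta>) = (k0 - I) / 2" using a by simp
      then show "I + B / (A - \<delta>) \<le> k0" using Ik by simp
    qed
    finally show "0 \<le> capital A \<delta> k0 c1 t" using capital_nonneg_iff[OF ci cn, of k0 A \<delta>] D(1) by simp
  qed
  have habb: "hab \<epsilon> \<eta> \<tau> c0 c1 t \<le> c1 t - B * (1 - q)" if t: "0 \<le> t" for t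
  proof -
    have "ennreal (hab \<epsilon> \<eta> \<tau> c0 c1 t) = ennreal \<epsilon> *
       (\<integral>\<^sup>+ u. ennreal (indicator {t-\<tau>..t} u * ((g0 \<tau> c0 u + clp c1 u) * exp (\<eta> * (u - t)))) \<partial>lborel)"
      by (rule hab_enn[OF D(2,3) c1i c1n t]) (use eta eps in auto)
    also have "\<dots> \<le> ennreal \<epsilon> *
       (\<integral>\<^sup>+ u. ennreal (indicator {t-\<tau>..t} u * ((g0 \<tau> c0 u + clp ?cm u) * exp (\<eta> * (u - t)))) +
             ennreal (indicator {t-\<tau>..t} u * (B * exp (\<eta> * (u - t)))) \<partial>lborel)"
    proof (intro mult_left_mono nn_integral_mono)
      fix u
      have n1: "0 \<le> indicator {t-\<tau>..t} u * ((g0 \<tau> c0 u + clp ?cm u) * exp (\<eta> * (u - t)))"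
        using g0_nonneg[OF D(3)] P(3) by (auto simp: clp_def indicator_def)
      have n2: "0 \<le> indicator {t-\<tau>..t} u * (B * exp (\<eta> * (u - t)))" using B by simp
      have "indicator {t-\<tau>..t} u * ((g0 \<tau> c0 u + clp c1 u) * exp (\<eta> * (u - t))) \<le>
          indicator {t-\<tau>..t} u * ((g0 \<tau> c0 u + clp ?cm u) * exp (\<eta> * (u - t))) +
          indicator {t-\<tau>..t} u * (B * exp (\<eta> * (u - t)))"
        using B by (auto simp: clp_def c1_def indicator_def ring_distribs)
      then show "ennreal (indicator {t-\<tau>..t} u * ((g0 \<tau> c0 u + clp c1 u) * exp (\<eta> * (u - t)))) \<le>
          ennreal (indicator {t-\<tau>..t} u * ((g0 \<tau> c0 u + clp ?cm u) * exp (\<eta> * (u - t)))) +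
             ennreal (indicator {t-\<tau>..t} u * (B * exp (\<eta> * (u - t))))"
        using n1 n2 by (simp add: ennreal_plus[symmetric] ennreal_leI del: ennreal_plus)
    qed simp
    also have "\<dots> = ennreal \<epsilon> *
       (\<integral>\<^sup>+ u. ennreal (indicator {t-\<tau>..t} u * ((g0 \<tau> c0 u + clp ?cm u) * exp (\<eta> * (u - t)))) \<partial>lborel) +
       ennreal \<epsilon> * ennreal (B * (1 - exp (- \<eta> * \<tau>)) / \<eta>)"
    proof -
      have gm: "g0 \<tau> c0 \<in> borel_measurable borel"
        using borel_measurable_integrable[OF g0_integrable[OF D(2)]] by simp
      have cl: "clp ?cm \<in> borel_measurable borel" using clp_measurable[OF P(1)] by simp
      show ?thesis using gm cl
        by (subst nn_integral_add) (auto simp: exp_window[OF eta tau less_imp_le[OF B]] distrib_left)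
    qed
    also have "ennreal \<epsilon> *
       (\<integral>\<^sup>+ u. ennreal (indicator {t-\<tau>..t} u * ((g0 \<tau> c0 u + clp ?cm u) * exp (\<eta> * (u - t)))) \<partial>lborel) =
       ennreal (hab \<epsilon> \<eta> \<tau> c0 ?cm t)"
      by (rule hab_enn[OF D(2,3) P(1), symmetric]) (use P(3) eta eps t in auto)
    also have "hab \<epsilon> \<eta> \<tau> c0 ?cm t = ?cm t" using P(2) t by simp
    also have "ennreal (?cm t) + ennreal \<epsilon> * ennreal (B * (1 - exp (- \<eta> * \<tau>)) / \<eta>) =
        ennreal (?cm t + B * q)"
    proof -
      have nn: "0 \<le> B * (1 - exp (- \<eta> * \<tau>)) / \<eta>" using B eta tau by simp
      have ar: "\<epsilon> * (B * (1 - exp (- \<eta> * \<tau>)) / \<eta>) = B * q" by (simp add: q_def field_simps)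
      have "ennreal \<epsilon> * ennreal (B * (1 - exp (- \<eta> * \<tau>)) / \<eta>) = ennreal (B * q)"
        using nn eps ar by (simp add: ennreal_mult[symmetric])
      moreover have "0 \<le> B * q" using nn eps ar by (metis mult_nonneg_nonneg less_imp_le)
      ultimately show ?thesis using P(3) by (simp add: ennreal_plus)
    qed
    finally have "hab \<epsilon> \<eta> \<tau> c0 c1 t \<le> ?cm t + B * q"
    proof (subst (asm) ennreal_le_iff)
      show "0 \<le> ?cm t + B * q" using P(3) B q0 by (simp add: add_nonneg_nonneg)
    qed
    then show ?thesis by (simp add: c1_def algebra_simps)
  qed
  have Bq: "0 < B * (1 - q)" using B q by (simp add: q_def)
  have adm: "c1 \<in> admissible A \<delta> \<epsilon> \<eta> \<tau> k0 c0"
    unfolding admissible_def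
  proof (intro CollectI conjI c1n c1i cap AE_I2 impI)
    fix t :: real assume t: "0 \<le> t"
    show "hab \<epsilon> \<eta> \<tau> c0 c1 t \<le> c1 t" using habb[OF t] Bq by linarith
    show "0 \<le> hab \<epsilon> \<eta> \<tau> c0 c1 t" by (rule hab_nonneg[OF D(3) c1n t]) (use eps in simp)
  qed
  note Bq
  moreover have "\<forall>t\<ge>0. B * (1 - q) \<le> c1 t - hab \<epsilon> \<eta> \<tau> c0 c1 t"
  proof (intro allI impI)
    fix t :: real assume "0 \<le> t"
    from habb[OF this] show "B * (1 - q) \<le> c1 t - hab \<epsilon> \<eta> \<tau> c0 c1 t" by linarith
  qed
  ultimately show ?thesis using adm by blast
qed



lemma gamma_gt1_obj:
  fixes \<gamma> \<rho> m :: real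
  assumes g: "1 < \<gamma>" and rho: "0 < \<rho>" and m: "0 < m"
    and cm: "\<forall>t\<ge>0. m \<le> c t - hab \<epsilon> \<eta> \<tau> c0 c t"
  shows "- \<infinity> < objective \<gamma> \<rho> \<epsilon> \<eta> \<tau> c0 c"
proof -
  let ?h = "hab \<epsilon> \<eta> \<tau> c0 c"
  define D where "D = m powr (1 - \<gamma>) / (\<gamma> - 1)"
  have D: "0 \<le> D" using g by (simp add: D_def)
  have "(\<integral>\<^sup>+ t. (if 0 < c t - ?h t then ennreal (- util \<gamma> (c t - ?h t) * exp (- \<rho> * t)) else \<infinity>) * indicator {0..} t \<partial>lborel)
     \<le> (\<integral>\<^sup>+ t. ennreal (D * exp (- \<rho> * t)) * indicator {0..} t \<partial>lborel)"
  proof (intro nn_integral_mono)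
    fix t
    show "(if 0 < c t - ?h t then ennreal (- util \<gamma> (c t - ?h t) * exp (- \<rho> * t)) else \<infinity>) * indicator {0..} t
        \<le> ennreal (D * exp (- \<rho> * t)) * indicator {0..} t"
    proof (cases "0 \<le> t")
      case True
      have x: "m \<le> c t - ?h t" using cm True by simp
      then have pos: "0 < c t - ?h t" using m by simp
      have "(c t - ?h t) powr (1 - \<gamma>) \<le> m powr (1 - \<gamma>)"
        using x m g by (intro powr_mono2') auto
      moreover have "- util \<gamma> (c t - ?h t) = (c t - ?h t) powr (1 - \<gamma>) / (\<gamma> - 1)"
        unfolding util_def by (simp add: minus_divide_right)
      ultimately have "- util \<gamma> (c t - ?h t) \<le> D"
        unfolding D_def using g by (simp add: divide_right_mono)
      then have "- util \<gamma> (c t - ?h t) * exp (- \<rho> * t) \<le> D * exp (- \<rho> * t)"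
        by (intro mult_right_mono) auto
      then show ?thesis using pos True by (simp add: ennreal_leI)
    qed simp
  qed
  also have "\<dots> = ennreal (D / \<rho>)" by (rule exp_tail[OF rho D])
  finally have fin: "(\<integral>\<^sup>+ t. (if 0 < c t - ?h t then ennreal (- util \<gamma> (c t - ?h t) * exp (- \<rho> * t)) else \<infinity>) * indicator {0..} t \<partial>lborel) < top"
    using ennreal_less_top le_less_trans by blast
  show ?thesis unfolding objective_def using g fin
    by (simp add: ereal_uminus_less_reorder)
qed

theorem mainTheorem4:
  fixes A \<delta> \<rho> \<gamma> \<epsilon> \<eta> \<tau> :: real
  assumes "A > 0" "\<delta> > 0" "\<rho> > 0" "\<gamma> > 0" "\<gamma> \<noteq> 1" "\<epsilon> > 0" "\<eta> > 0" "\<tau> > 0"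
    and "lambda0 \<epsilon> \<eta> \<tau> < A - \<delta>"
    and "\<rho> > (A - \<delta>) * (1 - \<gamma>)"
    and "\<gamma> > 1 \<Longrightarrow> \<epsilon> / \<eta> * (1 - exp (- \<eta> * \<tau>)) < 1 \<and> A - \<delta> > 0"
  shows "(\<forall>k0 c0. data_ok A \<delta> \<epsilon> \<eta> \<tau> k0 c0 \<longrightarrow>
            admissible A \<delta> \<epsilon> \<eta> \<tau> k0 c0 \<noteq> {} \<and>
            \<bar>value_fun A \<delta> \<rho> \<gamma> \<epsilon> \<eta> \<tau> k0 c0\<bar> \<noteq> \<infinity>)
       \<and> (\<gamma> < 1 \<longrightarrow> (\<exists>M>0. \<forall>k0 c0. data_ok A \<delta> \<epsilon> \<eta> \<tau> k0 c0 \<longrightarrow>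
            0 \<le> value_fun A \<delta> \<rho> \<gamma> \<epsilon> \<eta> \<tau> k0 c0 \<and>
            value_fun A \<delta> \<rho> \<gamma> \<epsilon> \<eta> \<tau> k0 c0 \<le> ereal (M * k0 powr (1 - \<gamma>))))
       \<and> (\<gamma> > 1 \<longrightarrow> (\<forall>k0 c0. data_ok A \<delta> \<epsilon> \<eta> \<tau> k0 c0 \<longrightarrow>
            - \<infinity> < value_fun A \<delta> \<rho> \<gamma> \<epsilon> \<eta> \<tau> k0 c0 \<and>
            value_fun A \<delta> \<rho> \<gamma> \<epsilon> \<eta> \<tau> k0 c0 \<le> 0))"
proof -
  note asm = assms
  have g1: "\<gamma> < 1 \<or> 1 < \<gamma>" using assms(5) by linarith
  let ?V = "\<lambda>k0 c0. value_fun A \<delta> \<rho> \<gamma> \<epsilon> \<eta> \<tau> k0 c0"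
  define M where "M = ((\<rho> - (A - \<delta>) * (1 - \<gamma>)) / \<gamma>) powr (- \<gamma>) / (1 - \<gamma>)"
  have lt1: "0 \<le> ?V k0 c0 \<and> ?V k0 c0 \<le> ereal (M * k0 powr (1 - \<gamma>))"
    if g: "\<gamma> < 1" and d: "data_ok A \<delta> \<epsilon> \<eta> \<tau> k0 c0" for k0 c0
  proof
    have cmA: "cm \<epsilon> \<eta> \<tau> c0 \<in> admissible A \<delta> \<epsilon> \<eta> \<tau> k0 c0"
      by (rule cm_admissible[OF assms(6,7,8) d])
    have "0 \<le> objective \<gamma> \<rho> \<epsilon> \<eta> \<tau> c0 (cm \<epsilon> \<eta> \<tau> c0)"
      using g by (simp add: objective_def)
    also have "\<dots> \<le> ?V k0 c0" unfolding value_fun_def using cmA by (intro SUP_upper)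
    finally show "0 \<le> ?V k0 c0" .
    show "?V k0 c0 \<le> ereal (M * k0 powr (1 - \<gamma>))"
      unfolding value_fun_def
    proof (rule SUP_least)
      fix c assume "c \<in> admissible A \<delta> \<epsilon> \<eta> \<tau> k0 c0"
      then show "objective \<gamma> \<rho> \<epsilon> \<eta> \<tau> c0 c \<le> ereal (M * k0 powr (1 - \<gamma>))"
        using gamma_lt1_bound[OF assms(4) g assms(10) data_okD(1)[OF d]] unfolding M_def by simp
    qed
  qed
  have gt1: "- \<infinity> < ?V k0 c0 \<and> ?V k0 c0 \<le> 0"
    if g: "1 < \<gamma>" and d: "data_ok A \<delta> \<epsilon> \<eta> \<tau> k0 c0" for k0 c0
  proof
    have h: "\<epsilon> / \<eta> * (1 - exp (- \<eta> * \<tau>)) < 1" "0 < A - \<delta>" using assms(11) g by auto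
    obtain c m where c: "c \<in> admissible A \<delta> \<epsilon> \<eta> \<tau> k0 c0" and m: "0 < m"
      and cm: "\<forall>t\<ge>0. m \<le> c t - hab \<epsilon> \<eta> \<tau> c0 c t"
      using c1_control[OF assms(6,7,8) d h(2) h(1)] by blast
    have "- \<infinity> < objective \<gamma> \<rho> \<epsilon> \<eta> \<tau> c0 c" by (rule gamma_gt1_obj[OF g assms(3) m cm])
    also have "\<dots> \<le> ?V k0 c0" unfolding value_fun_def using c by (intro SUP_upper)
    finally show "- \<infinity> < ?V k0 c0" .
    show "?V k0 c0 \<le> 0"
      unfolding value_fun_def
    proof (rule SUP_least)
      fix c assume "c \<in> admissible A \<delta> \<epsilon> \<eta> \<tau> k0 c0"
      show "objective \<gamma> \<rho> \<epsilon> \<eta> \<tau> c0 c \<le> 0" using g by (simp add: objective_def)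
    qed
  qed
  have fin: "\<bar>v\<bar> \<noteq> \<infinity>" if "v \<noteq> \<infinity>" "v \<noteq> - \<infinity>" for v :: ereal
    using that by (cases v) auto
  have P1: "\<forall>k0 c0. data_ok A \<delta> \<epsilon> \<eta> \<tau> k0 c0 \<longrightarrow>
            admissible A \<delta> \<epsilon> \<eta> \<tau> k0 c0 \<noteq> {} \<and> \<bar>?V k0 c0\<bar> \<noteq> \<infinity>"
  proof (intro allI impI conjI)
    fix k0 c0 assume d: "data_ok A \<delta> \<epsilon> \<eta> \<tau> k0 c0"
    show "admissible A \<delta> \<epsilon> \<eta> \<tau> k0 c0 \<noteq> {}" using cm_admissible[OF assms(6,7,8) d] by blast
    show "\<bar>?V k0 c0\<bar> \<noteq> \<infinity>"
    proof (cases "\<gamma> < 1")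
      case True
      then show ?thesis using lt1[OF True d] by (intro fin) auto
    next
      case False
      then have "1 < \<gamma>" using g1 by simp
      then show ?thesis using gt1[OF _ d] by (intro fin) auto
    qed
  qed
  have Mpos: "0 < M" if "\<gamma> < 1"
  proof -
    have "0 < (\<rho> - (A - \<delta>) * (1 - \<gamma>)) / \<gamma>" using assms(4,10) by simp
    then have "0 < ((\<rho> - (A - \<delta>) * (1 - \<gamma>)) / \<gamma>) powr (- \<gamma>)" by auto
    then show ?thesis using that unfolding M_def by (intro divide_pos_pos) auto
  qed
  show ?thesis
  proof (intro conjI impI)
    show "\<forall>k0 c0. data_ok A \<delta> \<epsilon> \<eta> \<tau> k0 c0 \<longrightarrow>
            admissible A \<delta> \<epsilon> \<eta> \<tau> k0 c0 \<noteq> {} \<and> \<bar>?V k0 c0\<bar> \<noteq> \<infinity>" by (rule P1)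
  next
    assume g: "\<gamma> < 1"
    show "\<exists>M>0. \<forall>k0 c0. data_ok A \<delta> \<epsilon> \<eta> \<tau> k0 c0 \<longrightarrow>
            0 \<le> ?V k0 c0 \<and> ?V k0 c0 \<le> ereal (M * k0 powr (1 - \<gamma>))"
      using lt1[OF g] Mpos[OF g] by blast
  next
    assume g: "1 < \<gamma>"
    show "\<forall>k0 c0. data_ok A \<delta> \<epsilon> \<eta> \<tau> k0 c0 \<longrightarrow> - \<infinity> < ?V k0 c0 \<and> ?V k0 c0 \<le> 0"
      using gt1[OF g] by blast
  qed
qed

end
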